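(* Let $d\ge1$ and let $\{\vec X_\varepsilon\}_{\varepsilon>0}$ be $\mathbb R^d$-valued random vectors such that $\vec X_\varepsilon\to\vec X$ in distribution as $\varepsilon\to0$ for some random vector $\vec X$. Suppose there is a continuous, strictly positive, integrable function $f:\mathbb R^d\to(0,\infty)$ such that for every compact $\mathcal K\subseteq\mathbb R^d$, uniformly over $\vec x,\vec y\in\mathcal K$, as $\varepsilon\to0$, $$\frac{\mathbb P\bigl(\vec X_\varepsilon\in\vec x+[-\varepsilon,\varepsilon)^d\bigr)}{\mathbb P\bigl(\vec X_\varepsilon\in\vec y+[-\varepsilon,\varepsilon)^d\bigr)}\cdot\frac{f(\vec y)}{f(\vec x)}\to1.$$ Then $\vec X$ is absolutely continuous with respect to Lebesgue measure on $\mathbb R^d$, with density $f(\vec x)/\int_{\mathbb R^d}f(\vec z)\,d\vec z$. *)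

theory Defs
  imports "HOL-Probability.Probability"
begin

definition half_open_cube :: "real^'n \<Rightarrow> real \<Rightarrow> (real^'n) set" where
  "half_open_cube x e = {y. \<forall>i. x$i - e \<le> y$i \<and> y$i < x$i + e}"

definition conv_distr_at0 :: "(real \<Rightarrow> 'a::topological_space measure) \<Rightarrow> 'a measure \<Rightarrow> bool" where
  "conv_distr_at0 \<mu> \<nu> \<longleftrightarrow>
     (\<forall>g::'a \<Rightarrow> real. continuous_on UNIV g \<and> bounded (range g) \<longrightarrow>
        ((\<lambda>e. \<integral>x. g x \<partial>(\<mu> e)) \<longlongrightarrow> (\<integral>x. g x \<partial>\<nu>)) (at_right 0))"

end

theory Submission
  imports Defs
begin
lemma integrable_bounded_support:
  fixes g :: "real^'n \<Rightarrow> real"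
  assumes "g \<in> borel_measurable borel" "A \<in> sets borel" "bounded A"
    and "\<And>x. \<bar>g x\<bar> \<le> B * indicator A x"
  shows "integrable lborel g"
proof -
  have "emeasure lborel A < \<infinity>"
    using assms(3) by (metis bounded_subset_cbox_symmetric emeasure_bounded_finite assms(2) less_top)
  then have i: "integrable lborel (\<lambda>x. B * indicator A x)"
    using assms(2) by (intro integrable_mult_right) auto
  show ?thesis
  proof (rule Bochner_Integration.integrable_bound[OF i])
    show "g \<in> borel_measurable lborel" using assms(1) by simp
    show "AE x in lborel. norm (g x) \<le> norm (B * indicator A x)"
      using assms(4) by (intro AE_I2) (smt (verit) real_norm_def)
  qed
qed

definition Sy :: "real^'n::finite \<Rightarrow> real \<Rightarrow> (real^'n) set" where
  "Sy y e = {x. \<forall>i. y$i - e < x$i \<and> x$i \<le> y$i + e}"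

lemma Sy_iff: "x \<in> Sy y e \<longleftrightarrow> y \<in> half_open_cube x e"
proof -
  have "\<forall>i. (y$i - e < x$i \<and> x$i \<le> y$i + e) = (x$i - e \<le> y$i \<and> y$i < x$i + e)" by auto
  then show ?thesis unfolding Sy_def half_open_cube_def by simp
qed

lemma Sy_borel: fixes y :: "real^'n::finite" shows "Sy y e \<in> sets borel"
proof -
  have "Sy y e = (\<Inter>i. {x. y$i - e < x$i}) \<inter> (\<Inter>i. {x. x$i \<le> y$i + e})"
    unfolding Sy_def by auto
  moreover have "open (\<Inter>i. {x::real^'n. y$i - e < x$i})"
    by (intro open_INT ballI open_Collect_less continuous_intros) simp
  moreover have "closed (\<Inter>i. {x::real^'n. x$i \<le> y$i + e})"
    by (intro closed_INT ballI closed_Collect_le continuous_intros)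
  ultimately show ?thesis by auto
qed

lemma hoc_borel: fixes x :: "real^'n::finite" shows "half_open_cube x e \<in> sets borel"
proof -
  have "half_open_cube x e = (\<Inter>i. {y. x$i - e \<le> y$i}) \<inter> (\<Inter>i. {y. y$i < x$i + e})"
    unfolding half_open_cube_def by auto
  moreover have "open (\<Inter>i. {y::real^'n. y$i < x$i + e})"
    by (intro open_INT ballI open_Collect_less continuous_intros) simp
  moreover have "closed (\<Inter>i. {y::real^'n. x$i - e \<le> y$i})"
    by (intro closed_INT ballI closed_Collect_le continuous_intros)
  ultimately show ?thesis by auto
qed

lemma Sy_sub: "e > 0 \<Longrightarrow> box (\<chi> i. y$i - e) (\<chi> i. y$i + e) \<subseteq> Sy y e"
  "Sy y e \<subseteq> cbox (\<chi> i. y$i - e) (\<chi> i. y$i + e)"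
  unfolding Sy_def by (auto simp: mem_box_cart) (meson less_imp_le)+

lemma Sy_bounded: "bounded (Sy y e)"
  using Sy_sub(2) bounded_cbox bounded_subset by blast

lemma prod_Basis_cart: "(\<Prod>b\<in>(Basis::(real^'n::finite) set). ((\<chi> i. y$i + e) - (\<chi> i. y$i - e)) \<bullet> b) = (2*e)^CARD('n)"
proof -
  have "(\<Prod>b\<in>(Basis::(real^'n::finite) set). ((\<chi> i. y$i + e) - (\<chi> i. y$i - e)) \<bullet> b)
     = (\<Prod>b\<in>(Basis::(real^'n::finite) set). 2*e)"
    by (rule prod.cong) (auto simp: Basis_vec_def inner_axis)
  also have "\<dots> = (2*e)^CARD('n)" by simp
  finally show ?thesis .
qed

lemma Sy_measure: 
  fixes y :: "real^'n::finite"
  assumes "e > 0"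
  shows "emeasure lborel (Sy y e) = ennreal ((2*e)^CARD('n))"
    "measure lborel (Sy y e) = (2*e)^CARD('n)"
proof -
  have b: "emeasure lborel (box (\<chi> i. y$i - e) (\<chi> i. y$i + e)) = ennreal ((2*e)^CARD('n))"
    using assms prod_Basis_cart[of y e] by (subst emeasure_lborel_box) (auto simp: Basis_vec_def inner_axis)
  have c: "emeasure lborel (cbox (\<chi> i. y$i - e) (\<chi> i. y$i + e)) = ennreal ((2*e)^CARD('n))"
    using assms prod_Basis_cart[of y e] by (subst emeasure_lborel_cbox) (auto simp: Basis_vec_def inner_axis)
  show "emeasure lborel (Sy y e) = ennreal ((2*e)^CARD('n))"
  proof (rule antisym)
    show "emeasure lborel (Sy y e) \<le> ennreal ((2*e)^CARD('n))"
      using emeasure_mono[OF Sy_sub(2), of y e lborel] c by simp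
    show "ennreal ((2*e)^CARD('n)) \<le> emeasure lborel (Sy y e)"
    proof -
      have bs: "box (\<chi> i. y$i - e) (\<chi> i. y$i + e) \<subseteq> Sy y e" using Sy_sub(1)[OF assms] .
      show ?thesis using emeasure_mono[OF bs, where M=lborel] b Sy_borel[of y e] by simp
    qed
  qed
  then show "measure lborel (Sy y e) = (2*e)^CARD('n)"
    using assms by (simp add: measure_def)
qed

lemma Sy_dist: fixes y :: "real^'n::finite" and e :: real assumes "x \<in> Sy y e" shows "dist x y \<le> CARD('n) * e"
proof -
  have "dist x y = norm (x - y)" by (simp add: dist_norm)
  also have "\<dots> \<le> (\<Sum>i\<in>UNIV. \<bar>(x - y)$i\<bar>)" by (rule norm_le_l1_cart)
  also have "\<dots> \<le> (\<Sum>i\<in>(UNIV::'n set). e)"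
    proof (intro sum_mono)
    fix i
    have "y $ i - e < x $ i \<and> x $ i \<le> y $ i + e" using assms unfolding Sy_def by auto
    then show "\<bar>(x - y)$i\<bar> \<le> e" by auto
  qed
  finally show ?thesis by simp
qed

lemma H_bound:
  fixes h :: "real^'n::finite \<Rightarrow> real"
  assumes e: "e > 0" and hm: "h \<in> borel_measurable borel" and hb: "\<And>x. \<bar>h x\<bar> \<le> B"
    and lip: "\<And>x y. \<bar>h x - h y\<bar> \<le> Lh * dist x y" and Lh: "Lh \<ge> 0"
  shows "\<bar>(\<integral>x. h x * indicator (Sy y e) x \<partial>lborel) - (2*e)^CARD('n) * h y\<bar>
           \<le> (2*e)^CARD('n) * (Lh * CARD('n) * e)"
proof -
  have fin: "emeasure lborel (Sy y e) < \<infinity>" using Sy_measure(1)[OF e, of y] by simp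
  have ind: "integrable lborel (indicator (Sy y e) :: _ \<Rightarrow> real)"
    by (rule integrable_real_indicator) (use fin in \<open>simp_all add: Sy_borel\<close>)
  have i1: "integrable lborel (\<lambda>x. h x * indicator (Sy y e) x)"
    by (rule integrable_bounded_support[where A="Sy y e" and B=B])
       (auto simp: hm Sy_borel Sy_bounded hb indicator_def[symmetric] intro!: borel_measurable_times borel_measurable_indicator,
        auto simp: indicator_def hb)
  have i2: "integrable lborel (\<lambda>x. h y * indicator (Sy y e) x)"
    using ind by (intro integrable_mult_right) auto
  have i3: "integrable lborel (\<lambda>x. (Lh * CARD('n) * e) * indicator (Sy y e) x)"
    using ind by (intro integrable_mult_right) auto
  have "(\<integral>x. h x * indicator (Sy y e) x \<partial>lborel) - (2*e)^CARD('n) * h y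
      = (\<integral>x. h x * indicator (Sy y e) x - h y * indicator (Sy y e) x \<partial>lborel)"
    using i1 i2 Sy_measure(2)[OF e, of y] Sy_borel[of y e] fin by (simp add: mult.commute)
  also have "\<bar>\<dots>\<bar> \<le> (\<integral>x. (Lh * CARD('n) * e) * indicator (Sy y e) x \<partial>lborel)"
  proof (rule integral_abs_bound_integral)
    show "integrable lborel (\<lambda>x. h x * indicator (Sy y e) x - h y * indicator (Sy y e) x)"
      using i1 i2 by auto
    show "integrable lborel (\<lambda>x. (Lh * CARD('n) * e) * indicator (Sy y e) x)" by (rule i3)
    fix x
    show "\<bar>h x * indicator (Sy y e) x - h y * indicator (Sy y e) x\<bar> \<le> (Lh * CARD('n) * e) * indicator (Sy y e) x"
    proof (cases "x \<in> Sy y e")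
      case True
      have "\<bar>h x - h y\<bar> \<le> Lh * dist x y" by (rule lip)
      also have "\<dots> \<le> Lh * (CARD('n) * e)"
        using Sy_dist[OF True] Lh by (intro mult_left_mono) auto
      finally show ?thesis using True by simp
    qed simp
  qed
  also have "\<dots> = (2*e)^CARD('n) * (Lh * CARD('n) * e)"
    using Sy_measure(2)[OF e, of y] Sy_borel[of y e] fin by simp
  finally show ?thesis .
qed

definition Sset :: "real \<Rightarrow> ((real^'n::finite) \<times> (real^'n)) set" where
  "Sset e = {z. snd z \<in> half_open_cube (fst z) e}"

lemma Sset_borel: "(Sset e :: ((real^'n::finite) \<times> (real^'n)) set) \<in> sets borel"
proof -
  have eq: "Sset e = (\<Inter>i. {z. (fst z)$i - e \<le> (snd z)$i}) \<inter> (\<Inter>i. {z. (snd z)$i < (fst z)$i + e})"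
    unfolding Sset_def half_open_cube_def by auto
  have o: "open (\<Inter>i. {z::(real^'n) \<times> (real^'n). (snd z)$i < (fst z)$i + e})"
    by (intro open_INT ballI open_Collect_less continuous_intros) simp
  have c: "closed (\<Inter>i. {z::(real^'n) \<times> (real^'n). (fst z)$i - e \<le> (snd z)$i})"
    by (intro closed_INT ballI closed_Collect_le continuous_intros)
  show ?thesis unfolding eq using sets.Int[OF borel_closed[OF c] borel_open[OF o]] .
qed

lemma Sset_pair: "sets (M \<Otimes>\<^sub>M N) = sets (borel :: ((real^'n::finite) \<times> (real^'n)) measure)"
  if "sets M = sets borel" "sets N = sets borel" for M N
proof -
  have "sets (M \<Otimes>\<^sub>M N) = sets (borel \<Otimes>\<^sub>M borel)" using that by (rule sets_pair_measure_cong)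
  then show ?thesis by (simp only: borel_prod)
qed

lemma tonelli_cube:
  fixes \<mu> :: "(real^'n::finite) measure" and h :: "real^'n \<Rightarrow> real"
  assumes P: "prob_space \<mu>" and sets_mu: "sets \<mu> = sets borel"
    and e: "e > 0" and hm: "h \<in> borel_measurable borel" and hb: "\<And>x. \<bar>h x\<bar> \<le> B"
    and hpos: "\<And>x. h x \<ge> 0" and hR: "\<And>x. x \<notin> cball 0 R \<Longrightarrow> h x = 0"
  shows "(\<lambda>x. measure \<mu> (half_open_cube x e)) \<in> borel_measurable borel"
    and "(\<integral>x. h x * measure \<mu> (half_open_cube x e) \<partial>lborel)
         = (\<integral>y. (\<integral>x. h x * indicator (Sy y e) x \<partial>lborel) \<partial>\<mu>)"
    and "integrable lborel (\<lambda>x. h x * measure \<mu> (half_open_cube x e))"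
    and "integrable \<mu> (\<lambda>y. (\<integral>x. h x * indicator (Sy y e) x \<partial>lborel))"
proof -
  interpret \<mu>: prob_space \<mu> by (rule P)
  interpret pair_sigma_finite lborel \<mu>
    by (intro pair_sigma_finite.intro sigma_finite_lborel prob_space_imp_sigma_finite P)
  have Ssets: "Sset e \<in> sets (lborel \<Otimes>\<^sub>M \<mu>)"
    using Sset_pair[of lborel \<mu>] sets_mu Sset_borel by simp
  have pre: "Pair x -` Sset e = half_open_cube x e" for x
    unfolding Sset_def by auto
  have "(\<lambda>x. emeasure \<mu> (Pair x -` Sset e)) \<in> borel_measurable lborel"
    by (rule measurable_emeasure_Pair1[OF Ssets])
  then have "(\<lambda>x. enn2real (emeasure \<mu> (half_open_cube x e))) \<in> borel_measurable borel"
    unfolding pre by simp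
  then show pm: "(\<lambda>x. measure \<mu> (half_open_cube x e)) \<in> borel_measurable borel"
    by (simp add: measure_def)
  let ?F = "\<lambda>x y. ennreal (h x * indicator (Sset e) (x, y))"
  have Fm: "case_prod ?F \<in> borel_measurable (lborel \<Otimes>\<^sub>M \<mu>)"
  proof -
    have "(\<lambda>z. h (fst z) * indicator (Sset e) z) \<in> borel_measurable (lborel \<Otimes>\<^sub>M \<mu>)"
    proof (intro borel_measurable_times borel_measurable_indicator)
      have "h \<in> borel_measurable lborel" using hm by simp
      then show "(\<lambda>z. h (fst z)) \<in> borel_measurable (lborel \<Otimes>\<^sub>M \<mu>)"
        using measurable_compose[OF measurable_fst] by blast
      show "Sset e \<in> sets (lborel \<Otimes>\<^sub>M \<mu>)" by (rule Ssets)
    qed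
    then show ?thesis by (simp add: case_prod_beta')
  qed
  have F: "(\<integral>\<^sup>+ y. (\<integral>\<^sup>+ x. ?F x y \<partial>lborel) \<partial>\<mu>) = (\<integral>\<^sup>+ x. (\<integral>\<^sup>+ y. ?F x y \<partial>\<mu>) \<partial>lborel)"
    by (rule Fubini'[OF Fm])
  have ind_eq: "indicator (Sset e) (x, y) = indicator (Sy y e) x" for x y :: "real^'n"
    by (simp add: indicator_def Sset_def Sy_iff)
  have ind_eq2: "indicator (Sset e) (x, y) = indicator (half_open_cube x e) y" for x y :: "real^'n"
    by (simp add: indicator_def Sset_def)
  define H where "H y = (\<integral>x. h x * indicator (Sy y e) x \<partial>lborel)" for y
  have fin: "emeasure lborel (Sy y e) < \<infinity>" for y using Sy_measure(1)[OF e, of y] by simp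
  have Hint: "integrable lborel (\<lambda>x. h x * indicator (Sy y e) x)" for y
    by (rule integrable_bounded_support[where A="Sy y e" and B=B])
       (auto simp: hm Sy_borel Sy_bounded hb indicator_def[symmetric] intro!: borel_measurable_times borel_measurable_indicator,
        auto simp: indicator_def hb)
  have inner1: "(\<integral>\<^sup>+ x. ?F x y \<partial>lborel) = ennreal (H y)" for y
    unfolding ind_eq H_def using Hint[of y] hpos
    by (intro nn_integral_eq_integral) (auto simp: indicator_def)
  have inner2: "(\<integral>\<^sup>+ y. ?F x y \<partial>\<mu>) = ennreal (h x * measure \<mu> (half_open_cube x e))" for x
  proof -
    have "(\<integral>\<^sup>+ y. ?F x y \<partial>\<mu>) = (\<integral>\<^sup>+ y. ennreal (h x) * indicator (half_open_cube x e) y \<partial>\<mu>)"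
      unfolding ind_eq2 by (intro nn_integral_cong) (auto simp: indicator_def)
    also have "\<dots> = ennreal (h x) * emeasure \<mu> (half_open_cube x e)"
      using hoc_borel sets_mu by (intro nn_integral_cmult_indicator) auto
    also have "\<dots> = ennreal (h x * measure \<mu> (half_open_cube x e))"
      using hpos by (simp add: \<mu>.emeasure_eq_measure ennreal_mult)
    finally show ?thesis .
  qed
  have Hm: "H \<in> borel_measurable \<mu>"
  proof -
    have "(\<lambda>y. \<integral>\<^sup>+ x. ?F x y \<partial>lborel) \<in> borel_measurable \<mu>"
    proof -
      have "(\<lambda>z. ?F (snd z) (fst z)) \<in> borel_measurable (\<mu> \<Otimes>\<^sub>M lborel)"
      proof -
        have sw: "(\<lambda>z. (snd z, fst z)) \<in> \<mu> \<Otimes>\<^sub>M lborel \<rightarrow>\<^sub>M lborel \<Otimes>\<^sub>M \<mu>"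
          by (intro measurable_Pair measurable_snd measurable_fst)
        show ?thesis using measurable_compose[OF sw Fm] by (simp add: case_prod_beta')
      qed
      then show ?thesis
        by (intro sigma_finite_measure.borel_measurable_nn_integral[OF sigma_finite_lborel]) (simp add: case_prod_beta')
    qed
    then have "(\<lambda>y. enn2real (\<integral>\<^sup>+ x. ?F x y \<partial>lborel)) \<in> borel_measurable \<mu>" by simp
    moreover have "enn2real (\<integral>\<^sup>+ x. ?F x y \<partial>lborel) = H y" for y
      unfolding inner1 using hpos by (simp add: H_def)
    ultimately show ?thesis by simp
  qed
  have H_nonneg: "H y \<ge> 0" for y unfolding H_def using hpos by (intro Bochner_Integration.integral_nonneg) (auto simp: indicator_def)
  have H_bd: "H y \<le> B * (2*e)^CARD('n)" for y
  proof -
    have "H y \<le> (\<integral>x. B * indicator (Sy y e) x \<partial>lborel)"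
    proof (unfold H_def, intro integral_mono)
      have ind: "integrable lborel (indicator (Sy y e) :: _ \<Rightarrow> real)"
        by (rule integrable_real_indicator) (use fin[of y] in \<open>simp_all add: Sy_borel\<close>)
      then show "integrable lborel (\<lambda>x. B * indicator (Sy y e) x)" by auto
      show "integrable lborel (\<lambda>x. h x * indicator (Sy y e) x)" by (rule Hint)
      fix x show "h x * indicator (Sy y e) x \<le> B * indicator (Sy y e) x"
        using hb[of x] by (auto simp: indicator_def)
    qed
    also have "\<dots> = B * (2*e)^CARD('n)" using Sy_measure(2)[OF e, of y] Sy_borel[of y e] fin[of y] by simp
    finally show ?thesis .
  qed
  have Hint2: "integrable \<mu> H"
    using H_nonneg H_bd Hm by (intro \<mu>.integrable_const_bound[where B="B * (2*e)^CARD('n)"]) auto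
  then show "integrable \<mu> (\<lambda>y. (\<integral>x. h x * indicator (Sy y e) x \<partial>lborel))"
    unfolding H_def .
  show pint: "integrable lborel (\<lambda>x. h x * measure \<mu> (half_open_cube x e))"
  proof (rule integrable_bounded_support[where A="cball 0 R" and B=B])
    show "(\<lambda>x. h x * measure \<mu> (half_open_cube x e)) \<in> borel_measurable borel"
      using hm pm by (rule borel_measurable_times)
    fix x
    show "\<bar>h x * measure \<mu> (half_open_cube x e)\<bar> \<le> B * indicator (cball 0 R) x"
    proof (cases "x \<in> cball 0 R")
      case True
      have "\<bar>h x * measure \<mu> (half_open_cube x e)\<bar> = \<bar>h x\<bar> * measure \<mu> (half_open_cube x e)"
        by (simp add: abs_mult)
      also have "\<dots> \<le> B * 1" using hb[of x] \<mu>.prob_le_1 by (intro mult_mono) auto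
      finally show ?thesis using True by simp
    qed (use hR in auto)
  qed auto
  have "ennreal (\<integral>x. h x * measure \<mu> (half_open_cube x e) \<partial>lborel) = (\<integral>\<^sup>+ x. (\<integral>\<^sup>+ y. ?F x y \<partial>\<mu>) \<partial>lborel)"
    unfolding inner2 using pint hpos by (intro nn_integral_eq_integral[symmetric]) auto
  also have "\<dots> = (\<integral>\<^sup>+ y. ennreal (H y) \<partial>\<mu>)" unfolding F[symmetric] inner1 ..
  also have "\<dots> = ennreal (\<integral>y. H y \<partial>\<mu>)"
    using Hint2 H_nonneg by (intro nn_integral_eq_integral) auto
  finally have "ennreal (\<integral>x. h x * measure \<mu> (half_open_cube x e) \<partial>lborel) = ennreal (\<integral>y. H y \<partial>\<mu>)" .
  moreover have "0 \<le> (\<integral>x. h x * measure \<mu> (half_open_cube x e) \<partial>lborel)"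
    using hpos by (intro Bochner_Integration.integral_nonneg) auto
  moreover have "0 \<le> (\<integral>y. H y \<partial>\<mu>)" using H_nonneg by (intro Bochner_Integration.integral_nonneg) auto
  ultimately show "(\<integral>x. h x * measure \<mu> (half_open_cube x e) \<partial>lborel) = (\<integral>y. (\<integral>x. h x * indicator (Sy y e) x \<partial>lborel) \<partial>\<mu>)"
    by (simp add: H_def)
qed

lemma aux_div: fixes a b c K :: real assumes "c > 0" "\<bar>a - c*b\<bar> \<le> c*K" shows "\<bar>a/c - b\<bar> \<le> K"
proof -
  have "a/c - b = (a - c*b)/c" using assms(1) by (simp add: field_simps)
  then have "\<bar>a/c - b\<bar> = \<bar>a - c*b\<bar>/c" using assms(1) by simp
  also have "\<dots> \<le> K" using assms by (simp add: pos_divide_le_eq mult.commute)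
  finally show ?thesis .
qed

definition good :: "(real^'n::finite \<Rightarrow> real) \<Rightarrow> real \<Rightarrow> real \<Rightarrow> bool" where
  "good h Lh R \<longleftrightarrow> continuous_on UNIV h \<and> (\<forall>x. 0 \<le> h x) \<and> Lh \<ge> 0 \<and> R \<ge> 0 \<and>
     (\<forall>x y. \<bar>h x - h y\<bar> \<le> Lh * dist x y) \<and> (\<forall>x. x \<notin> cball 0 R \<longrightarrow> h x = 0)"

lemma good_bound:
  assumes "good h Lh R" shows "\<bar>h x\<bar> \<le> h 0 + Lh * R"
proof (cases "x \<in> cball 0 R")
  case True
  have "h x \<le> h 0 + \<bar>h x - h 0\<bar>" by simp
  also have "\<bar>h x - h 0\<bar> \<le> Lh * dist x 0" using assms unfolding good_def by blast
  also have "Lh * dist x 0 \<le> Lh * R" using True assms unfolding good_def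
    by (intro mult_left_mono) (auto simp: dist_commute)
  finally show ?thesis using assms unfolding good_def by auto
next
  case False then show ?thesis using assms unfolding good_def
    by (smt (verit) mult_nonneg_nonneg)
qed

lemma good_measurable: "good h Lh R \<Longrightarrow> h \<in> borel_measurable borel"
  unfolding good_def by (auto intro: borel_measurable_continuous_onI)

locale setting =
  fixes M :: "real \<Rightarrow> 'a measure" and X :: "real \<Rightarrow> 'a \<Rightarrow> real^'n::finite"
    and M0 :: "'b measure" and X0 :: "'b \<Rightarrow> real^'n"
    and f :: "real^'n \<Rightarrow> real"
  assumes probs: "\<And>e. e > 0 \<Longrightarrow> prob_space (M e)"
    and rvs: "\<And>e. e > 0 \<Longrightarrow> X e \<in> borel_measurable (M e)"
    and prob0: "prob_space M0"
    and rv0: "X0 \<in> borel_measurable M0"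
    and conv: "conv_distr_at0 (\<lambda>e. distr (M e) borel (X e)) (distr M0 borel X0)"
    and f_cont: "continuous_on UNIV f"
    and f_pos: "\<And>x. f x > 0"
    and f_int: "integrable lborel f"
    and ratio: "\<And>K. compact K \<Longrightarrow>
       (\<forall>\<delta>>0. \<forall>\<^sub>F e in at_right 0. \<forall>x\<in>K. \<forall>y\<in>K.
          \<bar>(measure (M e) (X e -` half_open_cube x e \<inter> space (M e))
             / measure (M e) (X e -` half_open_cube y e \<inter> space (M e)))
           * (f y / f x) - 1\<bar> < \<delta>)"
begin

definition "\<mu> e = distr (M e) borel (X e)"
definition "\<nu> = distr M0 borel X0"
definition "p e x = measure (\<mu> e) (half_open_cube x e)"
definition "A e = p e 0 / f 0"
definition "cc e = (2*e :: real)^CARD('n)"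

lemma mu_prob: assumes e: "e > 0" shows "prob_space (\<mu> e)"
  unfolding \<mu>_def using prob_space.prob_space_distr[OF probs[OF e] rvs[OF e]] .

lemma mu_sets: "sets (\<mu> e) = sets borel"
  unfolding \<mu>_def by simp

lemma nu_prob: "prob_space \<nu>"
  unfolding \<nu>_def using prob_space.prob_space_distr[OF prob0 rv0] .

lemma nu_sets: "sets \<nu> = sets borel"
  unfolding \<nu>_def by simp

lemma p_eq: assumes e: "e > 0" shows "measure (M e) (X e -` half_open_cube x e \<inter> space (M e)) = p e x"
  unfolding p_def \<mu>_def using measure_distr[OF rvs[OF e] hoc_borel[of x e]] by simp

lemma ratio': "compact K \<Longrightarrow> \<delta> > 0 \<Longrightarrow> \<forall>\<^sub>F e in at_right 0. e > 0 \<and> (\<forall>x\<in>K. \<forall>y\<in>K.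
          \<bar>(p e x / p e y) * (f y / f x) - 1\<bar> < \<delta>)"
proof -
  assume K: "compact K" and d: "\<delta> > 0"
  have "\<forall>\<^sub>F e in at_right 0. \<forall>x\<in>K. \<forall>y\<in>K.
          \<bar>(measure (M e) (X e -` half_open_cube x e \<inter> space (M e))
             / measure (M e) (X e -` half_open_cube y e \<inter> space (M e)))
           * (f y / f x) - 1\<bar> < \<delta>" using ratio[OF K] d by blast
  with eventually_at_right_less[of "0::real"] show ?thesis
    by eventually_elim (auto simp: p_eq)
qed

lemma p_nonneg: "p e x \<ge> 0" unfolding p_def by simp

lemma conv_h:
  fixes h :: "real^'n \<Rightarrow> real"
  assumes "continuous_on UNIV h" "\<And>x. \<bar>h x\<bar> \<le> B"
  shows "((\<lambda>e. \<integral>x. h x \<partial>\<mu> e) \<longlongrightarrow> (\<integral>x. h x \<partial>\<nu>)) (at_right 0)"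
proof -
  have "\<forall>x. norm (h x) \<le> B" using assms(2) by simp
  then have "bounded (range h)" unfolding bounded_iff by blast
  then show ?thesis using conv assms(1) unfolding conv_distr_at0_def \<mu>_def \<nu>_def by blast
qed

lemma step_i:
  assumes g: "good h Lh R"
  shows "((\<lambda>e. (\<integral>x. h x * p e x \<partial>lborel) / cc e) \<longlongrightarrow> (\<integral>x. h x \<partial>\<nu>)) (at_right 0)"
proof -
  define B where "B = h 0 + Lh * R"
  have hb: "\<bar>h x\<bar> \<le> B" for x using good_bound[OF g] B_def by auto
  have hm: "h \<in> borel_measurable borel" using good_measurable[OF g] .
  have hpos: "h x \<ge> 0" for x using g unfolding good_def by auto
  have hR: "x \<notin> cball 0 R \<Longrightarrow> h x = 0" for x using g unfolding good_def by auto
  have lip: "\<bar>h x - h y\<bar> \<le> Lh * dist x y" for x y using g unfolding good_def by auto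
  have Lh: "Lh \<ge> 0" using g unfolding good_def by auto
  have hc: "continuous_on UNIV h" using g unfolding good_def by auto
  let ?g1 = "\<lambda>e. (\<integral>x. h x * p e x \<partial>lborel) / cc e"
  let ?g2 = "\<lambda>e. \<integral>x. h x \<partial>\<mu> e"
  have "\<forall>\<^sub>F e in at_right 0. norm (?g1 e - ?g2 e) \<le> Lh * CARD('n) * e"
    using eventually_at_right_less
  proof eventually_elim
    case (elim e)
    then have e: "e > 0" by simp
    interpret P: prob_space "\<mu> e" using mu_prob[OF e] .
    note T = tonelli_cube[OF mu_prob[OF e] mu_sets e hm hb hpos hR]
    let ?H = "\<lambda>y. \<integral>x. h x * indicator (Sy y e) x \<partial>lborel"
    have c: "cc e > 0" unfolding cc_def using e by simp
    have hmu: "h \<in> borel_measurable (\<mu> e)" using hm mu_sets[of e] by (simp cong: measurable_cong_sets)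
    have hint: "integrable (\<mu> e) h" using hb hmu by (intro P.integrable_const_bound[where B=B]) auto
    have dint: "integrable (\<mu> e) (\<lambda>y. ?H y / cc e - h y)"
      using T(4) hint by (intro Bochner_Integration.integrable_diff integrable_divide)
    have "(\<integral>x. h x * p e x \<partial>lborel) = (\<integral>y. ?H y \<partial>\<mu> e)" using T(2) by (simp add: p_def)
    then have "?g1 e = (\<integral>y. ?H y \<partial>\<mu> e) / cc e" by simp
    also have "\<dots> = (\<integral>y. ?H y / cc e \<partial>\<mu> e)" by simp
    finally have "?g1 e - ?g2 e = (\<integral>y. ?H y / cc e - h y \<partial>\<mu> e)"
      using Bochner_Integration.integral_diff[OF integrable_divide[OF T(4)] hint] by simp
    also have "norm \<dots> \<le> (\<integral>y. norm (?H y / cc e - h y) \<partial>\<mu> e)"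
      by (rule integral_norm_bound)
    also have "\<dots> \<le> (\<integral>y. Lh * CARD('n) * e \<partial>\<mu> e)"
    proof (rule integral_mono)
      show "integrable (\<mu> e) (\<lambda>y. norm (?H y / cc e - h y))"
        using dint by (rule integrable_norm)
      show "integrable (\<mu> e) (\<lambda>y. Lh * CARD('n) * e)" by simp
      fix y
      have "\<bar>?H y - cc e * h y\<bar> \<le> cc e * (Lh * CARD('n) * e)"
        using H_bound[OF e hm hb lip Lh, of y] unfolding cc_def .
      then have "\<bar>?H y / cc e - h y\<bar> \<le> Lh * CARD('n) * e" by (rule aux_div[OF c])
      then show "norm (?H y / cc e - h y) \<le> Lh * CARD('n) * e" by simp
    qed
    also have "\<dots> = Lh * CARD('n) * e" using P.prob_space by simp
    finally show ?case .
  qed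
  moreover have "((\<lambda>e. Lh * CARD('n) * e) \<longlongrightarrow> 0) (at_right 0)"
    by (auto intro!: tendsto_eq_intros)
  ultimately have "((\<lambda>e. ?g1 e - ?g2 e) \<longlongrightarrow> 0) (at_right 0)" by (rule Lim_null_comparison)
  then have "((\<lambda>e. ?g2 e + (?g1 e - ?g2 e)) \<longlongrightarrow> (\<integral>x. h x \<partial>\<nu>) + 0) (at_right 0)"
    by (intro tendsto_add conv_h[OF hc hb])
  then show ?thesis by simp
qed

end

lemma aux_ratio:
  fixes px p0 f0 fx d :: real
  assumes "p0 > 0" "f0 > 0" "fx > 0" "\<bar>px / p0 * (f0 / fx) - 1\<bar> < d"
  shows "\<bar>px - (p0/f0) * fx\<bar> \<le> d * ((p0/f0) * fx)"
proof -
  define r where "r = px / p0 * (f0 / fx)"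
  have "px - (p0/f0) * fx = ((p0/f0) * fx) * (r - 1)"
    unfolding r_def using assms(1-3) by (simp add: field_simps)
  then have "\<bar>px - (p0/f0) * fx\<bar> = ((p0/f0) * fx) * \<bar>r - 1\<bar>"
    using assms(1-3) by (simp add: abs_mult)
  also have "\<dots> \<le> ((p0/f0) * fx) * d"
    using assms unfolding r_def by (intro mult_left_mono) auto
  finally show ?thesis by (simp add: mult.commute)
qed

context setting
begin

lemma f_meas: "f \<in> borel_measurable borel"
  using f_cont by (rule borel_measurable_continuous_onI)

lemma p0_pos_ev: "\<forall>\<^sub>F e in at_right 0. p e 0 > 0"
proof -
  have "\<forall>\<^sub>F e in at_right 0. e > 0 \<and> (\<forall>x\<in>{0}. \<forall>y\<in>{0}. \<bar>(p e x / p e y) * (f y / f x) - 1\<bar> < 1/2)"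
    by (rule ratio') auto
  then show ?thesis
  proof eventually_elim
    case (elim e)
    then have "\<bar>(p e 0 / p e 0) * (f 0 / f 0) - 1\<bar> < 1/2" by auto
    then have "p e 0 \<noteq> 0" by auto
    then show ?case using p_nonneg[of e 0] by simp
  qed
qed

lemma A_pos_ev: "\<forall>\<^sub>F e in at_right 0. A e > 0"
  using p0_pos_ev by eventually_elim (simp add: A_def f_pos)

lemma hf_int:
  assumes g: "good h Lh R"
  shows "integrable lborel (\<lambda>x. h x * f x)"
proof (rule Bochner_Integration.integrable_bound)
  show "integrable lborel (\<lambda>x. (h 0 + Lh * R) * f x)" using f_int by simp
  show "(\<lambda>x. h x * f x) \<in> borel_measurable lborel"
    using good_measurable[OF g] f_meas by simp
  show "AE x in lborel. norm (h x * f x) \<le> norm ((h 0 + Lh * R) * f x)"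
  proof (intro AE_I2)
    fix x
    have "\<bar>h x\<bar> * f x \<le> (h 0 + Lh * R) * f x"
      using good_bound[OF g, of x] f_pos[of x] by (intro mult_right_mono) auto
    then show "norm (h x * f x) \<le> norm ((h 0 + Lh * R) * f x)"
      using f_pos[of x] by (simp add: abs_mult)
  qed
qed

lemma step_ii:
  assumes g: "good h Lh R"
  shows "((\<lambda>e. (\<integral>x. h x * p e x \<partial>lborel) / A e) \<longlongrightarrow> (\<integral>x. h x * f x \<partial>lborel)) (at_right 0)"
proof -
  define B where "B = h 0 + Lh * R"
  have hb: "\<bar>h x\<bar> \<le> B" for x using good_bound[OF g] B_def by auto
  have hm: "h \<in> borel_measurable borel" using good_measurable[OF g] .
  have hpos: "h x \<ge> 0" for x using g unfolding good_def by auto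
  have hR: "x \<notin> cball 0 R \<Longrightarrow> h x = 0" for x using g unfolding good_def by auto
  have R: "R \<ge> 0" using g unfolding good_def by auto
  define I where "I = (\<integral>x. h x * f x \<partial>lborel)"
  have I: "I \<ge> 0" unfolding I_def using hpos f_pos
    by (intro Bochner_Integration.integral_nonneg) (simp add: less_imp_le)
  have hfi: "integrable lborel (\<lambda>x. h x * f x)" by (rule hf_int[OF g])
  show ?thesis unfolding I_def[symmetric]
  proof (rule tendstoI)
    fix \<epsilon> :: real assume eps: "\<epsilon> > 0"
    define d where "d = min (1/2) (\<epsilon> / (I + 1))"
    have d: "d > 0" unfolding d_def using eps I by auto
    have "\<forall>\<^sub>F e in at_right 0. e > 0 \<and> (\<forall>x\<in>cball 0 R. \<forall>y\<in>cball 0 R. \<bar>(p e x / p e y) * (f y / f x) - 1\<bar> < d)"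
      by (rule ratio') (auto simp: d)
    with p0_pos_ev show "\<forall>\<^sub>F e in at_right 0. dist ((\<integral>x. h x * p e x \<partial>lborel) / A e) I < \<epsilon>"
    proof eventually_elim
      case (elim e)
      then have e: "e > 0" and p0: "p e 0 > 0" by auto
      have Ap: "A e > 0" unfolding A_def using p0 f_pos by simp
      have pt: "\<bar>h x * p e x - A e * (h x * f x)\<bar> \<le> d * A e * (h x * f x)" for x
      proof (cases "x \<in> cball 0 R")
        case True
        then have "\<bar>(p e x / p e 0) * (f 0 / f x) - 1\<bar> < d" using elim R by auto
        then have "\<bar>p e x - A e * f x\<bar> \<le> d * (A e * f x)"
          unfolding A_def by (rule aux_ratio[OF p0 f_pos f_pos])
        then have "h x * \<bar>p e x - A e * f x\<bar> \<le> h x * (d * (A e * f x))"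
          using hpos[of x] by (intro mult_left_mono)
        moreover have "\<bar>h x * p e x - A e * (h x * f x)\<bar> = h x * \<bar>p e x - A e * f x\<bar>"
        proof -
          have "h x * p e x - A e * (h x * f x) = h x * (p e x - A e * f x)" by (simp add: algebra_simps)
          then show ?thesis using hpos[of x] by (simp add: abs_mult)
        qed
        ultimately show ?thesis by (simp add: algebra_simps)
      qed (simp add: hR)
      note T = tonelli_cube[OF mu_prob[OF e] mu_sets e hm hb hpos hR]
      have hpi: "integrable lborel (\<lambda>x. h x * p e x)" using T(3) unfolding p_def .
      have "\<bar>(\<integral>x. h x * p e x \<partial>lborel) - A e * I\<bar> = \<bar>(\<integral>x. h x * p e x - A e * (h x * f x) \<partial>lborel)\<bar>"
        unfolding I_def using hpi hfi by simp
      also have "\<dots> \<le> (\<integral>x. d * A e * (h x * f x) \<partial>lborel)"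
        using hpi hfi pt by (intro integral_abs_bound_integral) auto
      also have "\<dots> = d * A e * I" unfolding I_def by simp
      finally have "\<bar>(\<integral>x. h x * p e x \<partial>lborel) - A e * I\<bar> \<le> d * A e * I" .
      then have "\<bar>(\<integral>x. h x * p e x \<partial>lborel) / A e - I\<bar> \<le> d * I"
        using Ap by (intro aux_div) (auto simp: algebra_simps)
      also have "d * I \<le> \<epsilon> / (I + 1) * I" unfolding d_def using I by (intro mult_right_mono) auto
      also have "\<dots> < \<epsilon>" using eps I by (simp add: field_simps)
      finally show ?case by (simp add: dist_real_def)
    qed
  qed
qed

end

definition h0 :: "real^'n::finite \<Rightarrow> real" where "h0 x = max 0 (1 - norm x)"

lemma good_h0: "good h0 1 1"
  unfolding good_def h0_def
proof (intro conjI allI impI)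
  show "continuous_on UNIV (\<lambda>x::real^'n. max 0 (1 - norm x))" by (intro continuous_intros)
  fix x y :: "real^'n"
  have "\<bar>norm x - norm y\<bar> \<le> norm (x - y)" by (rule norm_triangle_ineq3)
  then show "\<bar>max 0 (1 - norm x) - max 0 (1 - norm y)\<bar> \<le> 1 * dist x y"
    by (simp add: dist_norm)
qed auto

context setting
begin

lemma I0_pos: "(\<integral>x. h0 x * f x \<partial>lborel) > 0"
proof -
  have int: "integrable lborel (\<lambda>x. h0 x * f x)" by (rule hf_int[OF good_h0])
  have nn: "AE x in lborel. 0 \<le> h0 x * f x"
    using f_pos by (intro AE_I2) (auto simp: h0_def less_imp_le)
  have ge: "(\<integral>x. h0 x * f x \<partial>lborel) \<ge> 0" using nn by (rule integral_nonneg_AE)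
  have "(\<integral>x. h0 x * f x \<partial>lborel) \<noteq> 0"
  proof
    assume "(\<integral>x. h0 x * f x \<partial>lborel) = 0"
    then have ae: "AE x in lborel. h0 x * f x = 0" using integral_nonneg_eq_0_iff_AE[OF int nn] by simp
    have imp: "\<forall>x. h0 x * f x = 0 \<longrightarrow> x \<notin> ball 0 1"
    proof (intro allI impI notI)
      fix x :: "real^'n" assume "h0 x * f x = 0" "x \<in> ball 0 1"
      then show False using f_pos[of x] by (auto simp: h0_def)
    qed
    have "AE x in lborel. (x::real^'n) \<notin> ball 0 1"
      using ae by (rule eventually_mono) (use imp in blast)
    then have "emeasure lborel (ball (0::real^'n) 1) = 0"
      by (subst (asm) AE_iff_measurable[of "ball 0 1"]) auto
    moreover have "measure lborel (ball (0::real^'n) 1) > 0" using content_ball_pos[of 1 0] by simp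
    ultimately show False by (simp add: measure_def)
  qed
  with ge show ?thesis by simp
qed

definition "L = (\<integral>x. h0 x \<partial>\<nu>) / (\<integral>x. h0 x * f x \<partial>lborel)"

lemma T_lim: "((\<lambda>e. A e / cc e) \<longlongrightarrow> L) (at_right 0)"
proof -
  let ?G = "\<lambda>e. (\<integral>x. h0 x * p e x \<partial>lborel) / cc e"
  let ?J = "\<lambda>e. (\<integral>x. h0 x * p e x \<partial>lborel) / A e"
  have G: "(?G \<longlongrightarrow> (\<integral>x. h0 x \<partial>\<nu>)) (at_right 0)" by (rule step_i[OF good_h0])
  have J: "(?J \<longlongrightarrow> (\<integral>x. h0 x * f x \<partial>lborel)) (at_right 0)" by (rule step_ii[OF good_h0])
  have "((\<lambda>e. ?G e / ?J e) \<longlongrightarrow> L) (at_right 0)"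
    unfolding L_def using I0_pos by (intro tendsto_divide G J) auto
  moreover have "\<forall>\<^sub>F e in at_right 0. ?J e > 0"
    using order_tendstoD(1)[OF J I0_pos] .
  then have "\<forall>\<^sub>F e in at_right 0. ?G e / ?J e = A e / cc e"
    using A_pos_ev
  proof eventually_elim
    case (elim e)
    then have "(\<integral>x. h0 x * p e x \<partial>lborel) \<noteq> 0" "A e \<noteq> 0" by auto
    then show ?case by (simp add: field_simps)
  qed
  ultimately show ?thesis by (rule Lim_transform_eventually)
qed

lemma step_B:
  assumes g: "good h Lh R"
  shows "(\<integral>x. h x \<partial>\<nu>) = L * (\<integral>x. h x * f x \<partial>lborel)"
proof -
  let ?G = "\<lambda>e. (\<integral>x. h x * p e x \<partial>lborel) / cc e"
  let ?J = "\<lambda>e. (\<integral>x. h x * p e x \<partial>lborel) / A e"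
  have G: "(?G \<longlongrightarrow> (\<integral>x. h x \<partial>\<nu>)) (at_right 0)" by (rule step_i[OF g])
  have "((\<lambda>e. (A e / cc e) * ?J e) \<longlongrightarrow> L * (\<integral>x. h x * f x \<partial>lborel)) (at_right 0)"
    by (intro tendsto_mult T_lim step_ii[OF g])
  moreover have "\<forall>\<^sub>F e in at_right 0. (A e / cc e) * ?J e = ?G e"
    using A_pos_ev by eventually_elim simp
  ultimately have "(?G \<longlongrightarrow> L * (\<integral>x. h x * f x \<partial>lborel)) (at_right 0)"
    by (rule Lim_transform_eventually)
  with G show ?thesis by (intro tendsto_unique[of "at_right (0::real)"]) auto
qed

end

definition hk :: "(real^'n::finite) set \<Rightarrow> nat \<Rightarrow> real^'n \<Rightarrow> real" where
  "hk C n x = min 1 (real (Suc n) * infdist x C)"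

lemma min1_lip: fixes u v :: real shows "\<bar>min 1 u - min 1 v\<bar> \<le> \<bar>u - v\<bar>"
  by (cases "u \<le> 1"; cases "v \<le> 1") (auto simp: min_def)

lemma absk: fixes c s1 s2 :: real assumes "c \<ge> 0" shows "c * abs (s1 - s2) = abs (c * s1 - c * s2)"
proof -
  have "c * s1 - c * s2 = c * (s1 - s2)" by (simp add: algebra_simps)
  then show ?thesis using assms by (simp add: abs_mult)
qed

lemma good_hk:
  fixes a b :: "real^'n::finite"
  assumes R: "box a b \<subseteq> cball 0 R" "R \<ge> 0"
  shows "good (hk (- box a b) n) (real (Suc n)) R"
  unfolding good_def hk_def
proof (intro conjI allI impI)
  show "continuous_on UNIV (\<lambda>x::real^'n. min 1 (real (Suc n) * infdist x (- box a b)))"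
    by (intro continuous_intros)
  fix x y :: "real^'n"
  have "\<bar>infdist x (- box a b) - infdist y (- box a b)\<bar> \<le> dist x y" by (rule infdist_triangle_abs)
  then have "real (Suc n) * \<bar>infdist x (- box a b) - infdist y (- box a b)\<bar> \<le> real (Suc n) * dist x y"
    by (intro mult_left_mono) auto
  moreover have "real (Suc n) * \<bar>infdist x (- box a b) - infdist y (- box a b)\<bar>
     = \<bar>real (Suc n) * infdist x (- box a b) - real (Suc n) * infdist y (- box a b)\<bar>"
    by (rule absk) simp
  ultimately show "\<bar>min 1 (real (Suc n) * infdist x (- box a b)) - min 1 (real (Suc n) * infdist y (- box a b))\<bar>
      \<le> real (Suc n) * dist x y"
    using min1_lip[of "real (Suc n) * infdist x (- box a b)" "real (Suc n) * infdist y (- box a b)"] by linarith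
next
  fix x :: "real^'n" assume "x \<notin> cball 0 R"
  then have "x \<in> - box a b" using R by auto
  then show "min 1 (real (Suc n) * infdist x (- box a b)) = 0" by simp
qed (use R in \<open>auto simp: infdist_nonneg\<close>)

lemma hk_lim:
  fixes a b :: "real^'n::finite"
  assumes "box a b \<subseteq> cball 0 R"
  shows "(\<lambda>n. hk (- box a b) n x) \<longlonglongrightarrow> indicator (box a b) x"
proof (cases "x \<in> box a b")
  case True
  have ne: "- box a b \<noteq> {}"
  proof
    assume "- box a b = {}"
    then have "box a b = UNIV" by (metis double_compl Compl_empty_eq)
    then show False using bounded_box[of a b] not_bounded_UNIV by metis
  qed
  have d: "infdist x (- box a b) > 0"
    using True ne by (intro infdist_pos_not_in_closed) (auto simp: closed_Compl open_box)
  obtain N :: nat where N: "1 / infdist x (- box a b) < N" using reals_Archimedean2 by blast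
  have "eventually (\<lambda>n. hk (- box a b) n x = 1) sequentially"
    unfolding eventually_sequentially
  proof (intro exI allI impI)
    fix n assume "N \<le> n"
    then have "1 / infdist x (- box a b) < real (Suc n)" using N by linarith
    then have "1 \<le> real (Suc n) * infdist x (- box a b)" using d by (simp add: field_simps)
    then show "hk (- box a b) n x = 1" unfolding hk_def by simp
  qed
  then show ?thesis using True by (simp add: tendsto_eventually)
next
  case False
  then show ?thesis by (simp add: hk_def)
qed

context setting
begin

lemma L_nonneg: "L \<ge> 0"
  unfolding L_def using I0_pos
  by (intro divide_nonneg_pos Bochner_Integration.integral_nonneg) (auto simp: h0_def)

lemma step_C:
  fixes a b :: "real^'n"
  shows "measure \<nu> (box a b) = L * (\<integral>x. indicator (box a b) x * f x \<partial>lborel)"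
proof -
  obtain R where R: "box a b \<subseteq> cball 0 R" "R \<ge> 0"
  proof -
    obtain r where r: "0 < r" "box a b \<subseteq> ball 0 r" using bounded_subset_ballD[OF bounded_box[of a b], of 0] by blast
    then have "box a b \<subseteq> cball 0 r" using ball_subset_cball by blast
    with r show ?thesis using that[of r] by simp
  qed
  interpret N: prob_space \<nu> by (rule nu_prob)
  let ?s = "\<lambda>n. hk (- box a b) n"
  have g: "good (?s n) (real (Suc n)) R" for n by (rule good_hk[OF R])
  have sm: "?s n \<in> borel_measurable borel" for n by (rule good_measurable[OF g])
  have s01: "0 \<le> ?s n x \<and> ?s n x \<le> 1" for n x by (simp add: hk_def infdist_nonneg)
  have lim: "(\<lambda>n. ?s n x) \<longlonglongrightarrow> indicator (box a b) x" for x by (rule hk_lim[OF R(1)])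
  have l1: "(\<lambda>n. \<integral>x. ?s n x \<partial>\<nu>) \<longlonglongrightarrow> (\<integral>x. indicator (box a b) x \<partial>\<nu>)"
  proof (rule integral_dominated_convergence[where w="\<lambda>_. 1"])
    show "indicator (box a b) \<in> borel_measurable \<nu>" using nu_sets by (simp cong: measurable_cong_sets)
    show "?s n \<in> borel_measurable \<nu>" for n using sm[of n] nu_sets by (simp cong: measurable_cong_sets)
    show "integrable \<nu> (\<lambda>_. 1::real)" by simp
    show "AE x in \<nu>. (\<lambda>n. ?s n x) \<longlonglongrightarrow> indicator (box a b) x" using lim by simp
    show "AE x in \<nu>. norm (?s n x) \<le> 1" for n using s01 by (intro AE_I2) auto
  qed
  have l2: "(\<lambda>n. \<integral>x. ?s n x * f x \<partial>lborel) \<longlonglongrightarrow> (\<integral>x. indicator (box a b) x * f x \<partial>lborel)"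
  proof (rule integral_dominated_convergence[where w="f"])
    show "(\<lambda>x. indicator (box a b) x * f x) \<in> borel_measurable lborel" using f_meas by simp
    show "(\<lambda>x. ?s n x * f x) \<in> borel_measurable lborel" for n using sm[of n] f_meas by simp
    show "integrable lborel f" by (rule f_int)
    show "AE x in lborel. (\<lambda>n. ?s n x * f x) \<longlonglongrightarrow> indicator (box a b) x * f x"
      using lim by (intro AE_I2 tendsto_mult tendsto_const) 
    show "AE x in lborel. norm (?s n x * f x) \<le> f x" for n
    proof (intro AE_I2)
      fix x
      have "?s n x * f x \<le> 1 * f x" using s01[of n x] f_pos[of x] by (intro mult_right_mono) auto
      then show "norm (?s n x * f x) \<le> f x" using s01[of n x] f_pos[of x] by (simp add: abs_mult)
    qed
  qed
  have "(\<lambda>n. \<integral>x. ?s n x \<partial>\<nu>) \<longlonglongrightarrow> L * (\<integral>x. indicator (box a b) x * f x \<partial>lborel)"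
    unfolding step_B[OF g] by (intro tendsto_mult tendsto_const l2)
  with l1 have "(\<integral>x. indicator (box a b) x \<partial>\<nu>) = L * (\<integral>x. indicator (box a b) x * f x \<partial>lborel)"
    by (rule LIMSEQ_unique)
  moreover have "(\<integral>x. indicator (box a b) x \<partial>\<nu>) = measure \<nu> (box a b)"
    using nu_sets by simp
  ultimately show ?thesis by simp
qed

end

context setting
begin

lemma Lf_meas: "(\<lambda>x. ennreal (L * f x)) \<in> borel_measurable lborel"
  using f_meas by simp

lemma Lf_meas': "(\<lambda>x. ennreal (L * f x)) \<in> borel_measurable borel"
  using Lf_meas by simp

lemma nu_density: "\<nu> = density lborel (\<lambda>x. ennreal (L * f x))"
proof (rule measure_eqI_generator_eq[where E="range (\<lambda>(a, b). box a b)" and \<Omega>=UNIV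
      and A="\<lambda>n. box (- (real n *\<^sub>R One)) (real n *\<^sub>R One)"])
  interpret N: prob_space \<nu> by (rule nu_prob)
  show "Int_stable (range (\<lambda>(a, b). box a b :: (real^'n) set))"
    by (auto simp: Int_stable_def box_Int_box)
  show "range (\<lambda>(a, b). box a b) \<subseteq> Pow (UNIV :: (real^'n) set)" by auto
  show "sets \<nu> = sigma_sets UNIV (range (\<lambda>(a, b). box a b))"
    using nu_sets by (simp add: borel_eq_box)
  show "sets (density lborel (\<lambda>x. ennreal (L * f x))) = sigma_sets UNIV (range (\<lambda>(a, b). box a b))"
    by (simp add: borel_eq_box)
  show "range (\<lambda>n. box (- (real n *\<^sub>R One)) (real n *\<^sub>R One)) \<subseteq> range (\<lambda>(a, b). box a b :: (real^'n) set)"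
    by auto
  show "(\<Union>n. box (- (real n *\<^sub>R One)) (real n *\<^sub>R One)) = (UNIV :: (real^'n) set)"
    by (rule UN_box_eq_UNIV)
  show "emeasure \<nu> (box (- (real n *\<^sub>R One)) (real n *\<^sub>R One)) \<noteq> \<infinity>" for n by simp
  fix X assume "X \<in> range (\<lambda>(a, b). box a b :: (real^'n) set)"
  then obtain a b where X: "X = box a b" by auto
  have int: "integrable lborel (\<lambda>x. indicator (box a b) x * f x)"
    using integrable_real_mult_indicator[OF _ f_int, of "box a b"] by (simp add: mult.commute)
  have "emeasure \<nu> X = ennreal (L * (\<integral>x. indicator (box a b) x * f x \<partial>lborel))"
    unfolding X N.emeasure_eq_measure step_C ..
  also have "\<dots> = ennreal (\<integral>x. L * (indicator (box a b) x * f x) \<partial>lborel)" by simp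
  also have "\<dots> = (\<integral>\<^sup>+x. ennreal (L * (indicator (box a b) x * f x)) \<partial>lborel)"
    using int L_nonneg f_pos
    by (intro nn_integral_eq_integral[symmetric]) (auto simp: indicator_def less_imp_le)
  also have "\<dots> = (\<integral>\<^sup>+x. ennreal (L * f x) * indicator (box a b) x \<partial>lborel)"
    by (intro nn_integral_cong) (auto simp: indicator_def)
  also have "\<dots> = emeasure (density lborel (\<lambda>x. ennreal (L * f x))) X"
    unfolding X using Lf_meas by (subst emeasure_density) auto
  finally show "emeasure \<nu> X = emeasure (density lborel (\<lambda>x. ennreal (L * f x))) X" .
qed

lemma L_c: "L * (\<integral>x. f x \<partial>lborel) = 1"
proof -
  interpret N: prob_space \<nu> by (rule nu_prob)
  have "1 = emeasure \<nu> UNIV"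
    using N.emeasure_space_1 nu_sets by (simp add: sets_eq_imp_space_eq[OF nu_sets])
  also have "\<dots> = (\<integral>\<^sup>+x. ennreal (L * f x) * indicator UNIV x \<partial>lborel)"
    by (subst nu_density) (subst emeasure_density, auto simp: Lf_meas Lf_meas')
  also have "\<dots> = (\<integral>\<^sup>+x. ennreal (L * f x) \<partial>lborel)" by simp
  also have "\<dots> = ennreal (\<integral>x. L * f x \<partial>lborel)"
    using f_int L_nonneg f_pos by (intro nn_integral_eq_integral) (auto simp: less_imp_le)
  also have "\<dots> = ennreal (L * (\<integral>x. f x \<partial>lborel))" by simp
  finally have "ennreal (L * (\<integral>x. f x \<partial>lborel)) = 1" by simp
  moreover have "L * (\<integral>x. f x \<partial>lborel) \<ge> 0"
    using L_nonneg f_pos by (intro mult_nonneg_nonneg Bochner_Integration.integral_nonneg) (auto simp: less_imp_le)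
  ultimately show ?thesis by simp
qed

lemma final:
  "absolutely_continuous lborel (distr M0 lborel X0) \<and>
   distributed M0 lborel X0 (\<lambda>x. ennreal (f x / (\<integral>z. f z \<partial>lborel)))"
proof -
  have X0m: "X0 \<in> measurable M0 lborel" using rv0 by simp
  have dl: "distr M0 lborel X0 = \<nu>"
    unfolding \<nu>_def using rv0 X0m
    by (intro measure_eqI) (simp_all add: emeasure_distr)
  have c: "(\<integral>z. f z \<partial>lborel) \<noteq> 0" using L_c by auto
  have Lc: "L = 1 / (\<integral>z. f z \<partial>lborel)" using L_c c by (simp add: field_simps)
  have fc: "f x / (\<integral>z. f z \<partial>lborel) = L * f x" for x
    unfolding Lc by simp
  have eq: "distr M0 lborel X0 = density lborel (\<lambda>x. ennreal (f x / (\<integral>z. f z \<partial>lborel)))"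
    unfolding dl fc by (rule nu_density)
  have m: "(\<lambda>x. ennreal (f x / (\<integral>z. f z \<partial>lborel))) \<in> borel_measurable lborel"
    using f_meas by simp
  show ?thesis
    unfolding distributed_def eq using m X0m absolutely_continuousI_density[OF m] by simp
qed

end

theorem lemma11p2:
  fixes M :: "real \<Rightarrow> 'a measure" and X :: "real \<Rightarrow> 'a \<Rightarrow> real^'n"
    and M0 :: "'b measure" and X0 :: "'b \<Rightarrow> real^'n"
    and f :: "real^'n \<Rightarrow> real"
  assumes probs: "\<And>e. e > 0 \<Longrightarrow> prob_space (M e)"
    and rvs: "\<And>e. e > 0 \<Longrightarrow> X e \<in> borel_measurable (M e)"
    and prob0: "prob_space M0"
    and rv0: "X0 \<in> borel_measurable M0"
    and conv: "conv_distr_at0 (\<lambda>e. distr (M e) borel (X e)) (distr M0 borel X0)"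
    and f_cont: "continuous_on UNIV f"
    and f_pos: "\<And>x. f x > 0"
    and f_int: "integrable lborel f"
    and ratio: "\<And>K. compact K \<Longrightarrow>
       (\<forall>\<delta>>0. \<forall>\<^sub>F e in at_right 0. \<forall>x\<in>K. \<forall>y\<in>K.
          \<bar>(measure (M e) (X e -` half_open_cube x e \<inter> space (M e))
             / measure (M e) (X e -` half_open_cube y e \<inter> space (M e)))
           * (f y / f x) - 1\<bar> < \<delta>)"
  shows "absolutely_continuous lborel (distr M0 lborel X0) \<and>
         distributed M0 lborel X0 (\<lambda>x. ennreal (f x / (\<integral>z. f z \<partial>lborel)))"
proof -
  interpret setting M X M0 X0 f
    by (rule setting.intro[OF probs rvs prob0 rv0 conv f_cont f_pos f_int ratio])
  show ?thesis by (rule final)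
qed

end
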